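(* Let $1\le s\le n$, let $\mathbf{D}=[\mathbf{d}_1,\dots,\mathbf{d}_n]\in\mathbb{R}^{d\times n}$ be any matrix with $\max\{\|\mathbf{d}_i\|_2^2: i\in[n]\}\le\rho$, and let $\mathbf{g}\sim N(\mathbf{0},\mathbf{I}_d)$. Then \[ \mathbb{E}\sqrt{\frac1s\sum_{\ell=1}^s\big((\mathbf{D}^\top\mathbf{g})^*_\ell\big)^2}\ \le\ \sqrt{4\rho\log(\sqrt2\,n/s)}. \]
   Context: For $\mathbf{x}\in\mathbb{R}^n$, the nonincreasing rearrangement $\mathbf{x}^*$ satisfies $x_1^*\ge\dots\ge x_n^*\ge0$ with $x_i^*=|x_{\pi(i)}|$ for some permutation $\pi$. *)

theory Defs
  imports "HOL-Probability.Probability"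
begin

text \<open>Nonincreasing rearrangement of the absolute values of the first n entries
  of x (0-based list indexing: entry l corresponds to x^*_{l+1}).\<close>
definition rearr :: "(nat \<Rightarrow> real) \<Rightarrow> nat \<Rightarrow> real list" where
  "rearr x n = rev (sort (map (\<lambda>i. \<bar>x i\<bar>) [0..<n]))"

definition gauss_vec :: "nat \<Rightarrow> (nat \<Rightarrow> real) measure" where
  "gauss_vec d = PiM {..<d} (\<lambda>_. std_normal_distribution)"

definition DTg :: "nat \<Rightarrow> (nat \<Rightarrow> nat \<Rightarrow> real) \<Rightarrow> (nat \<Rightarrow> real) \<Rightarrow> nat \<Rightarrow> real" where
  "DTg d D g j = (\<Sum>i<d. D i j * g i)"

end

theory Submission imports Defs begin

abbreviation "NN \<equiv> std_normal_distribution"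

lemma ppsN: "product_prob_space (\<lambda>_::nat. NN)"
  unfolding product_prob_space_def product_prob_space_axioms_def product_sigma_finite_def
  using real_dist_normal_dist by (auto simp: real_distribution_def prob_space_imp_sigma_finite)

lemma ps_gauss: "prob_space (gauss_vec d)"
  unfolding gauss_vec_def using real_dist_normal_dist
  by (intro prob_space_PiM) (auto simp: real_distribution_def)

lemma distr_coord:
  assumes "i < d"
  shows "distr (gauss_vec d) NN (\<lambda>x. x i) = NN"
proof -
  interpret product_prob_space "\<lambda>_::nat. NN" "{..<d}" by (rule ppsN)
  have "distr (gauss_vec d) NN (\<lambda>x. x i) =
     distr (distr (gauss_vec d) (PiM {i} (\<lambda>_. NN)) (\<lambda>f. restrict f {i})) NN (\<lambda>x. x i)"
    unfolding gauss_vec_def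
    by (subst distr_distr) (auto simp: comp_def assms intro!: distr_cong measurable_restrict_subset)
  also have "\<dots> = distr (PiM {i} (\<lambda>_. NN)) NN (\<lambda>x. x i)"
    unfolding gauss_vec_def using assms by (subst distr_restrict[symmetric]) auto
  also have "\<dots> = NN" by (rule distr_singleton)
  finally show ?thesis .
qed

lemma distributed_coord:
  assumes "i < d"
  shows "distributed (gauss_vec d) lborel (\<lambda>x. x i) std_normal_density"
  unfolding distributed_def
proof (intro conjI)
  show "distr (gauss_vec d) lborel (\<lambda>x. x i) = density lborel (\<lambda>x. ennreal (std_normal_density x))"
    using distr_coord[OF assms] by (metis distr_cong sets_density sets_lborel)
  show "(\<lambda>x. x i) \<in> measurable (gauss_vec d) lborel"
  proof -
    have "(\<lambda>x. x i) \<in> measurable (gauss_vec d) NN"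
      unfolding gauss_vec_def using assms by auto
    then show ?thesis using measurable_cong_sets[of "gauss_vec d" "gauss_vec d" NN lborel] by simp
  qed
qed simp

lemma indep_coord:
  assumes "d > 0"
  shows "prob_space.indep_vars (gauss_vec d) (\<lambda>_. borel) (\<lambda>i x. x i) {..<d}"
proof -
  interpret G: prob_space "gauss_vec d" by (rule ps_gauss)
  have rv: "\<And>i. i \<in> {..<d} \<Longrightarrow> (\<lambda>x. x i) \<in> measurable (gauss_vec d) borel"
    unfolding gauss_vec_def by auto
  interpret product_prob_space "\<lambda>_::nat. NN" "{..<d}" by (rule ppsN)
  show ?thesis
  proof (subst G.indep_vars_iff_distr_eq_PiM'[OF _ rv])
    show "{..<d} \<noteq> {}" using assms by auto
    have "distr (gauss_vec d) (Pi\<^sub>M {..<d} (\<lambda>i. borel)) (\<lambda>x. \<lambda>i\<in>{..<d}. x i)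
       = distr (gauss_vec d) (Pi\<^sub>M {..<d} (\<lambda>i. NN)) (\<lambda>x. restrict x {..<d})"
      by (intro distr_cong refl sets_PiM_cong) auto
    also have "\<dots> = Pi\<^sub>M {..<d} (\<lambda>i. NN)"
      unfolding gauss_vec_def by (rule distr_restrict[symmetric]) auto
    also have "\<dots> = (\<Pi>\<^sub>M i\<in>{..<d}. distr (gauss_vec d) borel (\<lambda>x. x i))"
    proof (intro PiM_cong refl)
      fix i assume i: "i \<in> {..<d}"
      show "NN = distr (gauss_vec d) borel (\<lambda>x. x i)"
        using distr_coord[of i d] i by (metis distr_cong lessThan_iff sets_density sets_lborel)
    qed
    finally show "distr (gauss_vec d) (Pi\<^sub>M {..<d} (\<lambda>i. borel)) (\<lambda>x. \<lambda>i\<in>{..<d}. x i) =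
      (\<Pi>\<^sub>M i\<in>{..<d}. distr (gauss_vec d) borel (\<lambda>x. x i))" .
  qed auto
qed


lemma nd_scale:
  assumes "\<sigma> > 0" "0 < a"
  shows "normal_density 0 \<sigma> x * exp ((1 - a) / (2*\<sigma>\<^sup>2) * x\<^sup>2) = (1 / sqrt a) * normal_density 0 (\<sigma> / sqrt a) x"
proof -
  have "normal_density 0 \<sigma> x * exp ((1 - a) / (2*\<sigma>\<^sup>2) * x\<^sup>2) = 1 / sqrt (2 * pi * \<sigma>\<^sup>2) * exp (-x\<^sup>2/ (2 * \<sigma>\<^sup>2) + (1 - a) / (2*\<sigma>\<^sup>2) * x\<^sup>2)"
    by (simp add: normal_density_def mult_exp_exp)
  also have "-x\<^sup>2/ (2 * \<sigma>\<^sup>2) + (1 - a) / (2*\<sigma>\<^sup>2) * x\<^sup>2 = - x\<^sup>2 / (2 * (\<sigma> / sqrt a)\<^sup>2)"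
    using assms by (simp add: power_divide field_simps)
  also have "1 / sqrt (2 * pi * \<sigma>\<^sup>2) = (1 / sqrt a) * (1 / sqrt (2 * pi * (\<sigma> / sqrt a)\<^sup>2))"
    using assms by (simp add: power_divide real_sqrt_divide real_sqrt_mult)
  finally show ?thesis by (simp add: normal_density_def)
qed

lemma col_bound:
  fixes c :: "nat \<Rightarrow> real" and \<rho> :: real
  assumes rho: "\<rho> > 0" and csum: "(\<Sum>i<d. (c i)\<^sup>2) \<le> \<rho>"
  shows "\<exists>k \<le> sqrt 2. has_bochner_integral (gauss_vec d) (\<lambda>g. exp ((\<Sum>i<d. c i * g i)\<^sup>2 / (4*\<rho>))) k"
proof -
  interpret G: prob_space "gauss_vec d" by (rule ps_gauss)
  define J where "J = {i\<in>{..<d}. c i \<noteq> 0}"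
  have finJ: "finite J" unfolding J_def by auto
  have sumJ: "\<And>g. (\<Sum>i<d. c i * g i) = (\<Sum>i\<in>J. c i * g i)"
    unfolding J_def by (rule sum.mono_neutral_right) auto
  have sumJ2: "(\<Sum>i<d. (c i)\<^sup>2) = (\<Sum>i\<in>J. (c i)\<^sup>2)"
    unfolding J_def by (rule sum.mono_neutral_right) auto
  have meas: "(\<lambda>g. exp ((\<Sum>i<d. c i * g i)\<^sup>2 / (4*\<rho>))) \<in> borel_measurable (gauss_vec d)"
    unfolding gauss_vec_def by measurable
  show ?thesis
  proof (cases "J = {}")
    case True
    then have "(\<lambda>g. exp ((\<Sum>i<d. c i * g i)\<^sup>2 / (4*\<rho>))) = (\<lambda>_. 1)"
      using sumJ by auto
    then show ?thesis
      by (intro exI[of _ 1]) (auto simp: has_bochner_integral_iff G.prob_space)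
  next
    case False
    have dpos: "d > 0" using False unfolding J_def by auto
    have ind: "G.indep_vars (\<lambda>_. borel) (\<lambda>i g. c i * g i) J"
    proof -
      have "G.indep_vars (\<lambda>_. borel) (\<lambda>i x. x i) J"
        by (rule G.indep_vars_subset[OF indep_coord[OF dpos]]) (auto simp: J_def)
      then show ?thesis
        by (rule G.indep_vars_compose2[where Y="\<lambda>i x. c i * x"]) auto
    qed
    have dist_i: "distributed (gauss_vec d) lborel (\<lambda>g. c i * g i) (normal_density 0 \<bar>c i\<bar>)" if "i \<in> J" for i
      using G.normal_density_affine[OF distributed_coord[of i d], where \<alpha>="c i" and \<beta>=0] that unfolding J_def by auto
    define \<sigma> where "\<sigma> = sqrt (\<Sum>i\<in>J. \<bar>c i\<bar>\<^sup>2)"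
    have dist: "distributed (gauss_vec d) lborel (\<lambda>g. \<Sum>i\<in>J. c i * g i) (normal_density 0 \<sigma>)"
      using G.sum_indep_normal[OF finJ False ind, of "\<lambda>i. \<bar>c i\<bar>" "\<lambda>_. 0"] dist_i
      unfolding \<sigma>_def J_def by auto
    have sig2: "\<sigma>\<^sup>2 = (\<Sum>i<d. (c i)\<^sup>2)"
      unfolding \<sigma>_def sumJ2 by (simp add: sum_nonneg)
    have sigpos: "\<sigma> > 0" unfolding \<sigma>_def using False finJ unfolding J_def
      by (intro real_sqrt_gt_zero sum_pos) auto
    define a where "a = 1 - \<sigma>\<^sup>2 / (2*\<rho>)"
    have a_ge: "a \<ge> 1/2" unfolding a_def using sig2 csum rho by (simp add: field_simps)
    have apos: "a > 0" using a_ge by simp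
    have eqexp: "x\<^sup>2 / (4*\<rho>) = (1 - a) / (2*\<sigma>\<^sup>2) * x\<^sup>2" for x
      unfolding a_def using sigpos rho by (simp add: field_simps power2_eq_square)
    have "(\<integral>\<^sup>+g. ennreal (exp ((\<Sum>i<d. c i * g i)\<^sup>2 / (4*\<rho>))) \<partial>gauss_vec d)
        = (\<integral>\<^sup>+g. ennreal (exp ((\<Sum>i\<in>J. c i * g i)\<^sup>2 / (4*\<rho>))) \<partial>gauss_vec d)"
      by (simp add: sumJ)
    also have "\<dots> = (\<integral>\<^sup>+x. ennreal (normal_density 0 \<sigma> x) * ennreal (exp (x\<^sup>2 / (4*\<rho>))) \<partial>lborel)"
      by (rule distributed_nn_integral[OF dist, symmetric]) measurable
    also have "\<dots> = (\<integral>\<^sup>+x. ennreal (1 / sqrt a) * ennreal (normal_density 0 (\<sigma> / sqrt a) x) \<partial>lborel)"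
    proof (intro nn_integral_cong)
      fix x
      have "normal_density 0 \<sigma> x * exp (x\<^sup>2 / (4*\<rho>)) = (1 / sqrt a) * normal_density 0 (\<sigma> / sqrt a) x"
        unfolding eqexp by (rule nd_scale[OF sigpos apos])
      then show "ennreal (normal_density 0 \<sigma> x) * ennreal (exp (x\<^sup>2 / (4*\<rho>))) = ennreal (1 / sqrt a) * ennreal (normal_density 0 (\<sigma> / sqrt a) x)"
        using apos by (simp add: ennreal_mult[symmetric])
    qed
    also have "\<dots> = ennreal (1 / sqrt a) * (\<integral>\<^sup>+x. ennreal (normal_density 0 (\<sigma> / sqrt a) x) \<partial>lborel)"
      by (rule nn_integral_cmult) measurable
    also have "(\<integral>\<^sup>+x. ennreal (normal_density 0 (\<sigma> / sqrt a) x) \<partial>lborel) = 1"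
      using integrable_normal_density[of "\<sigma> / sqrt a"] integral_normal_density[of "\<sigma> / sqrt a"] sigpos apos
      by (subst nn_integral_eq_integral) auto
    finally have nn: "(\<integral>\<^sup>+g. ennreal (exp ((\<Sum>i<d. c i * g i)\<^sup>2 / (4*\<rho>))) \<partial>gauss_vec d) = ennreal (1 / sqrt a)"
      by simp
    have "1 / sqrt a \<le> sqrt 2"
    proof -
      have "sqrt (1/2) \<le> sqrt a" using a_ge by simp
      then have "1 / sqrt a \<le> 1 / sqrt (1/2)" using apos by (intro divide_left_mono) auto
      also have "1 / sqrt (1/2) = sqrt (2::real)" by (simp add: real_sqrt_divide)
      finally show ?thesis .
    qed
    then show ?thesis
      using has_bochner_integral_nn_integral[OF meas _ _ nn] apos by auto
  qed
qed


lemma rearr_length: "length (rearr x n) = n"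
  by (simp add: rearr_def)

lemma rearr_sum: "(\<Sum>l<n. f (rearr x n ! l)) = (\<Sum>j<n. f \<bar>x j\<bar>)"
proof -
  have "(\<Sum>l<n. f (rearr x n ! l)) = sum_list (map f (rearr x n))"
    by (simp add: sum_list_sum_nth rearr_length atLeast0LessThan)
  also have "\<dots> = sum_mset (image_mset f (mset (rearr x n)))"
    by (metis sum_mset_sum_list mset_map)
  also have "mset (rearr x n) = mset (map (\<lambda>i. \<bar>x i\<bar>) [0..<n])"
    by (simp add: rearr_def)
  also have "sum_mset (image_mset f (mset (map (\<lambda>i. \<bar>x i\<bar>) [0..<n]))) = (\<Sum>j<n. f \<bar>x j\<bar>)"
  proof -
    have "sum_mset (image_mset f (mset (map (\<lambda>i. \<bar>x i\<bar>) [0..<n]))) = sum_list (map f (map (\<lambda>i. \<bar>x i\<bar>) [0..<n]))"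
      by (metis sum_mset_sum_list mset_map)
    also have "\<dots> = (\<Sum>j<n. f \<bar>x j\<bar>)"
      by (simp add: sum_list_sum_nth atLeast0LessThan)
    finally show ?thesis .
  qed
  finally show ?thesis .
qed

lemma rearr_in: "l < n \<Longrightarrow> \<exists>j<n. rearr x n ! l = \<bar>x j\<bar>"
proof -
  assume "l < n"
  then have "rearr x n ! l \<in> set (rearr x n)" by (simp add: rearr_length)
  then show ?thesis by (auto simp: rearr_def)
qed


lemma pointwise_key:
  fixes r :: "real list" and s n :: nat and \<rho> L :: real and T :: real
  assumes s: "1 \<le> s" "s \<le> n" and rho: "\<rho> > 0"
    and L: "L = ln (sqrt 2 * real n / real s)"
    and T: "(\<Sum>l<n. exp ((r ! l)\<^sup>2 / (4*\<rho>))) = T"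
  shows "(1 / real s) * (\<Sum>l<s. (r ! l)\<^sup>2) \<le> 4*\<rho> * (L - 1 + T / (sqrt 2 * real n))"
proof -
  define Y where "Y = (1 / real s) * (\<Sum>l<s. (r ! l)\<^sup>2)"
  define t where "t = Y / (4*\<rho>)"
  have spos: "real s > 0" using s by simp
  have npos: "real n > 0" using s by simp
  have tsum: "t = (\<Sum>l<s. (1 / real s) *\<^sub>R ((r ! l)\<^sup>2 / (4*\<rho>)))"
    unfolding t_def Y_def by (simp add: sum_divide_distrib sum_distrib_left)
  have "exp t \<le> (\<Sum>l<s. (1 / real s) * exp ((r ! l)\<^sup>2 / (4*\<rho>)))"
    unfolding tsum
    by (rule convex_on_sum[OF _ _ exp_convex]) (use s in \<open>auto simp: lessThan_empty_iff\<close>)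
  also have "\<dots> = (1 / real s) * (\<Sum>l<s. exp ((r ! l)\<^sup>2 / (4*\<rho>)))"
    by (simp add: sum_distrib_left)
  also have "(\<Sum>l<s. exp ((r ! l)\<^sup>2 / (4*\<rho>))) \<le> T"
    unfolding T[symmetric] using s by (intro sum_mono2) auto
  finally have et: "exp t \<le> (1 / real s) * T" using spos by (simp add: divide_right_mono)
  have "1 + (t - L) \<le> exp (t - L)" by (rule exp_ge_add_one_self)
  also have "exp (t - L) = exp t / exp L" by (simp add: exp_diff)
  also have "exp L = sqrt 2 * real n / real s" unfolding L using spos npos by simp
  also have "exp t / (sqrt 2 * real n / real s) \<le> ((1 / real s) * T) / (sqrt 2 * real n / real s)"
    using et spos npos by (intro divide_right_mono) auto
  also have "\<dots> = T / (sqrt 2 * real n)" using spos by (simp add: field_simps)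
  finally have "t \<le> L - 1 + T / (sqrt 2 * real n)" by simp
  then show ?thesis unfolding Y_def[symmetric] using rho unfolding t_def by (simp add: field_simps)
qed


theorem lemma4p7:
  fixes d n s :: nat and D :: "nat \<Rightarrow> nat \<Rightarrow> real" and \<rho> :: real
  assumes "1 \<le> s" and "s \<le> n"
    and "\<forall>j<n. (\<Sum>i<d. (D i j)\<^sup>2) \<le> \<rho>"
  shows "(\<integral>\<^sup>+ g. ennreal (sqrt ((1 / real s) * (\<Sum>l<s. (rearr (DTg d D g) n ! l)\<^sup>2)))
            \<partial>gauss_vec d)
         \<le> ennreal (sqrt (4 * \<rho> * ln (sqrt 2 * real n / real s)))"
proof -
  interpret G: prob_space "gauss_vec d" by (rule ps_gauss)
  have rho0: "\<rho> \<ge> 0"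
  proof -
    have "0 < n" using assms(1,2) by simp
    then have "(\<Sum>i<d. (D i 0)\<^sup>2) \<le> \<rho>" using assms(3) by blast
    moreover have "0 \<le> (\<Sum>i<d. (D i 0)\<^sup>2)" by (simp add: sum_nonneg)
    ultimately show ?thesis by linarith
  qed
  show ?thesis
  proof (cases "\<rho> = 0")
    case True
    have zero: "\<And>g. (1 / real s) * (\<Sum>l<s. (rearr (DTg d D g) n ! l)\<^sup>2) = 0"
    proof -
      fix g
      have "\<And>l. l < s \<Longrightarrow> rearr (DTg d D g) n ! l = 0"
      proof -
        fix l assume "l < s"
        then obtain j where j: "j < n" "rearr (DTg d D g) n ! l = \<bar>DTg d D g j\<bar>"
          using rearr_in[of l n] assms(2) by fastforce
        have "(\<Sum>i<d. (D i j)\<^sup>2) \<le> 0" using assms(3) j(1) True by blast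
        moreover have "0 \<le> (\<Sum>i<d. (D i j)\<^sup>2)" by (simp add: sum_nonneg)
        ultimately have "(\<Sum>i<d. (D i j)\<^sup>2) = 0" by linarith
        then have "\<forall>i<d. (D i j)\<^sup>2 = 0"
          by (subst (asm) sum_nonneg_eq_0_iff) auto
        then show "rearr (DTg d D g) n ! l = 0" using j by (simp add: DTg_def)
      qed
      then show "(1 / real s) * (\<Sum>l<s. (rearr (DTg d D g) n ! l)\<^sup>2) = 0" by simp
    qed
    have "(\<lambda>g. ennreal (sqrt ((1 / real s) * (\<Sum>l<s. (rearr (DTg d D g) n ! l)\<^sup>2)))) = (\<lambda>_. 0)"
      by (simp only: zero) simp
    then show ?thesis by simp
  next
    case False
    then have rho: "\<rho> > 0" using rho0 by simp
    define L where "L = ln (sqrt 2 * real n / real s)"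
    have spos: "real s > 0" and npos: "real n > 0" using assms by auto
    have "1 < sqrt 2 * real n / real s"
    proof -
      have "1 < sqrt (2::real)" by simp
      also have "\<dots> \<le> sqrt 2 * (real n / real s)" using assms spos by (simp add: field_simps)
      finally show ?thesis by simp
    qed
    then have Lpos: "L > 0" unfolding L_def by simp
    define c where "c = sqrt (4 * \<rho> * L)"
    have cpos: "c > 0" unfolding c_def using rho Lpos by simp
    have c2: "c\<^sup>2 = 4 * \<rho> * L" unfolding c_def using rho Lpos by simp
    define E where "E j g = exp ((DTg d D g j)\<^sup>2 / (4*\<rho>))" for j g
    define T where "T g = (\<Sum>j<n. E j g)" for g
    define A where "A = (4*\<rho>*(L-1)/c + c)/2"
    define B where "B = (4*\<rho>/(c * (sqrt 2 * real n)))/2"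
    have Bpos: "B \<ge> 0" unfolding B_def using rho cpos npos by simp
    define h where "h g = A + B * T g" for g
    define Y where "Y g = (1 / real s) * (\<Sum>l<s. (rearr (DTg d D g) n ! l)\<^sup>2)" for g
    have Ynn: "Y g \<ge> 0" for g unfolding Y_def by (simp add: sum_nonneg)
    have key: "sqrt (Y g) \<le> h g" for g
    proof -
      have "(\<Sum>l<n. exp ((rearr (DTg d D g) n ! l)\<^sup>2 / (4*\<rho>))) = T g"
        using rearr_sum[where f="\<lambda>z. exp (z\<^sup>2 / (4*\<rho>))" and n=n and x="DTg d D g"] by (simp add: T_def E_def)
      then have Yb: "Y g \<le> 4*\<rho> * (L - 1 + T g / (sqrt 2 * real n))"
        unfolding Y_def using pointwise_key[OF assms(1,2) rho L_def] by blast
      have "2 * c * sqrt (Y g) \<le> Y g + c\<^sup>2"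
      proof -
        have "0 \<le> (sqrt (Y g) - c)\<^sup>2" by simp
        then show ?thesis using Ynn[of g] by (simp add: power2_eq_square algebra_simps)
      qed
      then have "sqrt (Y g) \<le> (Y g / c + c) / 2" using cpos by (simp add: field_simps power2_eq_square)
      also have "\<dots> \<le> (4*\<rho> * (L - 1 + T g / (sqrt 2 * real n)) / c + c) / 2"
        using Yb cpos by (simp add: divide_right_mono)
      also have "\<dots> = h g" unfolding h_def A_def B_def using cpos npos by (simp add: field_simps)
      finally show ?thesis .
    qed
    obtain k where k: "\<And>j. j < n \<Longrightarrow> k j \<le> sqrt 2 \<and> has_bochner_integral (gauss_vec d) (E j) (k j)"
    proof -
      have "\<forall>j. \<exists>kj. j < n \<longrightarrow> kj \<le> sqrt 2 \<and> has_bochner_integral (gauss_vec d) (E j) kj"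
      proof
        fix j
        show "\<exists>kj. j < n \<longrightarrow> kj \<le> sqrt 2 \<and> has_bochner_integral (gauss_vec d) (E j) kj"
        proof (cases "j < n")
          case True
          then have "(\<Sum>i<d. (D i j)\<^sup>2) \<le> \<rho>" using assms(3) by blast
          from col_bound[OF rho this] show ?thesis
            unfolding E_def DTg_def by blast
        qed simp
      qed
      then show ?thesis using that by metis
    qed
    have hT: "has_bochner_integral (gauss_vec d) T (\<Sum>j<n. k j)"
      unfolding T_def using k by (intro has_bochner_integral_sum) auto
    have hA: "has_bochner_integral (gauss_vec d) (\<lambda>_. A) A"
      by (auto simp: has_bochner_integral_iff G.prob_space)
    have hh: "has_bochner_integral (gauss_vec d) h (A + B * (\<Sum>j<n. k j))"
      unfolding h_def by (intro has_bochner_integral_add hA has_bochner_integral_mult_right hT)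
    have "(\<Sum>j<n. k j) \<le> real n * sqrt 2"
      using sum_mono[of "{..<n}" k "\<lambda>_. sqrt 2"] k by auto
    then have "A + B * (\<Sum>j<n. k j) \<le> A + B * (real n * sqrt 2)"
      using Bpos by (intro add_left_mono mult_left_mono) auto
    also have "\<dots> = (4*\<rho>*L/c + c)/2"
      unfolding A_def B_def using cpos npos by (simp add: field_simps)
    also have "\<dots> = c" using c2 cpos by (simp add: power2_eq_square field_simps)
    finally have bound: "A + B * (\<Sum>j<n. k j) \<le> c" .
    have hnn: "h g \<ge> 0" for g using key[of g] real_sqrt_ge_zero[OF Ynn[of g]] by linarith
    have "(\<integral>\<^sup>+ g. ennreal (sqrt (Y g)) \<partial>gauss_vec d) \<le> (\<integral>\<^sup>+ g. ennreal (h g) \<partial>gauss_vec d)"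
      by (intro nn_integral_mono ennreal_leI key)
    also have "\<dots> = ennreal (A + B * (\<Sum>j<n. k j))"
      using hh hnn by (subst nn_integral_eq_integral) (auto simp: has_bochner_integral_iff)
    also have "\<dots> \<le> ennreal c" using bound by (rule ennreal_leI)
    finally show ?thesis unfolding Y_def c_def L_def .
  qed
qed

end
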